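(* Let $G$ be a finite group acting transitively on a finite set $\mathsf X$, fix $x_0\in\mathsf X$, let $H=\{g\in G: gx_0=x_0\}$, and choose representatives $k_x\in G$ ($x\in\mathsf X$) with $k_xx_0=x$ and $k_{x_0}=e$. Let $\psi:H\times H\to U(1)$ be a 2-cocycle, i.e. $\psi(a,bc)\psi(b,c)=\psi(a,b)\psi(ab,c)$ for all $a,b,c\in H$. Define $L:G\times G\times\mathsf X\to U(1)$ by $$L^x_{g_1,g_2}=\psi(h_1,h_2),\qquad h_1=k_{g_1g_2x}^{-1}\,g_1\,k_{g_2x},\quad h_2=k_{g_2x}^{-1}\,g_2\,k_x\ (\in H).$$ Then $L$ is block independent if and only if $\psi$ extends to $G$, i.e. there exists a 2-cocycle $\Psi:G\times G\to\mathbb{C}^\times$ (equivalently, one with values in $U(1)$) whose restriction to $H\times H$ equals $\psi$.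
   Context: A gauge transformation is a pair of functions $\beta:G\times G\to\mathbb{C}^\times$, $\gamma:G\times\mathsf X\to\mathbb{C}^\times$ ($(g,x)\mapsto\gamma^x_g$); it maps $L$ to $L'^x_{g,h}=\dfrac{\beta_{g,h}\,\gamma^x_{gh}}{\gamma^{hx}_{g}\,\gamma^x_h}L^x_{g,h}$. For a family $L$ define $\ell^x_{a,b;g}=L^x_{ag,g^{-1}b}/L^x_{a,b}$. $L$ is called block independent if there is a gauge transformation such that the transformed quantities $\ell'^x_{a,b;g}$ are independent of $x\in\mathsf X$ for all $a,b,g\in G$. A 2-cocycle $\Psi:G\times G\to\mathbb{C}^\times$ satisfies $\Psi(a,bc)\Psi(b,c)=\Psi(a,b)\Psi(ab,c)$ for all $a,b,c\in G$. *)

theory Defs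
  imports "HOL-Analysis.Analysis" "HOL-Algebra.Group_Action"
begin

definition cocycle_on :: "('g, 'm) monoid_scheme \<Rightarrow> 'g set \<Rightarrow> ('g \<Rightarrow> 'g \<Rightarrow> complex) \<Rightarrow> bool" where
  "cocycle_on G S Psi \<longleftrightarrow>
     (\<forall>a\<in>S. \<forall>b\<in>S. Psi a b \<noteq> 0) \<and>
     (\<forall>a\<in>S. \<forall>b\<in>S. \<forall>c\<in>S.
        Psi a (b \<otimes>\<^bsub>G\<^esub> c) * Psi b c = Psi a b * Psi (a \<otimes>\<^bsub>G\<^esub> b) c)"

text \<open>Gauge transformation of L by (beta, gamma):
  L'^x_{g,h} = beta_{g,h} gamma^x_{gh} / (gamma^{hx}_g gamma^x_h) L^x_{g,h}.
  Here L x g h stands for L^x_{g,h} and gamma g x for gamma^x_g.\<close>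
definition gauge_transform ::
  "('g, 'm) monoid_scheme \<Rightarrow> ('g \<Rightarrow> 'x \<Rightarrow> 'x) \<Rightarrow> ('g \<Rightarrow> 'g \<Rightarrow> complex) \<Rightarrow> ('g \<Rightarrow> 'x \<Rightarrow> complex)
    \<Rightarrow> ('x \<Rightarrow> 'g \<Rightarrow> 'g \<Rightarrow> complex) \<Rightarrow> ('x \<Rightarrow> 'g \<Rightarrow> 'g \<Rightarrow> complex)" where
  "gauge_transform G act beta gamma L = (\<lambda>x g h.
     beta g h * gamma (g \<otimes>\<^bsub>G\<^esub> h) x / (gamma g (act h x) * gamma h x) * L x g h)"

definition ell :: "('g, 'm) monoid_scheme \<Rightarrow> ('x \<Rightarrow> 'g \<Rightarrow> 'g \<Rightarrow> complex) \<Rightarrow> 'x \<Rightarrow> 'g \<Rightarrow> 'g \<Rightarrow> 'g \<Rightarrow> complex" where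
  "ell G L x a b g = L x (a \<otimes>\<^bsub>G\<^esub> g) (inv\<^bsub>G\<^esub> g \<otimes>\<^bsub>G\<^esub> b) / L x a b"

definition block_independent ::
  "('g, 'm) monoid_scheme \<Rightarrow> 'x set \<Rightarrow> ('g \<Rightarrow> 'x \<Rightarrow> 'x) \<Rightarrow> ('x \<Rightarrow> 'g \<Rightarrow> 'g \<Rightarrow> complex) \<Rightarrow> bool" where
  "block_independent G X act L \<longleftrightarrow>
     (\<exists>beta gamma.
        (\<forall>g\<in>carrier G. \<forall>h\<in>carrier G. beta g h \<noteq> 0) \<and>
        (\<forall>g\<in>carrier G. \<forall>x\<in>X. gamma g x \<noteq> 0) \<and>
        (\<forall>a\<in>carrier G. \<forall>b\<in>carrier G. \<forall>g\<in>carrier G. \<forall>x\<in>X. \<forall>y\<in>X.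
           ell G (gauge_transform G act beta gamma L) x a b g
             = ell G (gauge_transform G act beta gamma L) y a b g))"

end

theory Submission
  imports Defs
begin


lemma (in group) coc_one: assumes "cocycle_on G (carrier G) P" "z \<in> carrier G"
  shows "P z \<one> = P \<one> \<one>"
proof -
  have "P z (\<one> \<otimes> \<one>) * P \<one> \<one> = P z \<one> * P (z \<otimes> \<one>) \<one>"
    using assms unfolding cocycle_on_def by blast
  moreover have "P z \<one> \<noteq> 0" using assms unfolding cocycle_on_def by blast
  ultimately show ?thesis using assms by simp
qed

lemma (in group) coc_conj:
  assumes cP: "cocycle_on G (carrier G) P" and c: "u \<in> carrier G" "v \<in> carrier G" "w \<in> carrier G"
    "g1 \<in> carrier G" "g2 \<in> carrier G"
  shows "P (inv u \<otimes> g1 \<otimes> v) (inv v \<otimes> g2 \<otimes> w) * (P (inv u) (g1 \<otimes> v) * P g1 v)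
           * (P (inv v) (g2 \<otimes> w) * P g2 w)
       = P g1 g2 * (P \<one> \<one> * P v (inv v)) * (P (inv u) (g1 \<otimes> g2 \<otimes> w) * P (g1 \<otimes> g2) w)"
proof -
  have C: "\<And>a b d. a \<in> carrier G \<Longrightarrow> b \<in> carrier G \<Longrightarrow> d \<in> carrier G \<Longrightarrow>
      P a (b \<otimes> d) * P b d = P a b * P (a \<otimes> b) d"
    using cP unfolding cocycle_on_def by blast
  define Pp where "Pp = inv u \<otimes> g1 \<otimes> v"
  define Q where "Q = inv v \<otimes> g2 \<otimes> w"
  define u' where "u' = inv u"
  define v' where "v' = inv v"
  have cc: "Pp \<in> carrier G" "Q \<in> carrier G" "u' \<in> carrier G" "v' \<in> carrier G"
    using c by (auto simp: Pp_def Q_def u'_def v'_def)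
  have e1: "P Pp Q * P v' (g2 \<otimes> w) = P Pp v' * P (u' \<otimes> g1) (g2 \<otimes> w)"
  proof -
    have "Q = v' \<otimes> (g2 \<otimes> w)" using c by (simp add: Q_def v'_def m_assoc)
    moreover have "Pp \<otimes> v' = u' \<otimes> g1" using c by (simp add: Pp_def v'_def u'_def m_assoc)
    ultimately show ?thesis using C[of Pp v' "g2 \<otimes> w"] cc c by simp
  qed
  have e2: "P u' g1 * P (u' \<otimes> g1) (g2 \<otimes> w) = P u' (g1 \<otimes> g2 \<otimes> w) * P g1 (g2 \<otimes> w)"
    using C[of u' g1 "g2 \<otimes> w"] cc c by (simp add: m_assoc)
  have e3: "P g1 (g2 \<otimes> w) * P g2 w = P g1 g2 * P (g1 \<otimes> g2) w"
    using C[of g1 g2 w] c by simp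
  have e4: "P (u' \<otimes> g1) v * P Pp v' = P \<one> \<one> * P v v'"
  proof -
    have h1: "P (u' \<otimes> g1) (v \<otimes> v') * P v v' = P (u' \<otimes> g1) v * P (u' \<otimes> g1 \<otimes> v) v'"
      using C[of "u' \<otimes> g1" v v'] cc c by simp
    have h2: "v \<otimes> v' = \<one>" using c by (simp add: v'_def)
    have h3: "P (u' \<otimes> g1) \<one> = P \<one> \<one>" using cc c by (intro coc_one[OF cP]) simp
    have h4: "u' \<otimes> g1 \<otimes> v = Pp" by (simp add: Pp_def u'_def)
    from h1 have "P \<one> \<one> * P v v' = P (u' \<otimes> g1) v * P Pp v'"
      by (simp only: h2 h3 h4)
    then show ?thesis by simp
  qed
  have e6: "P u' (g1 \<otimes> v) * P g1 v = P u' g1 * P (u' \<otimes> g1) v"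
    using C[of u' g1 v] cc c by simp
  have "P Pp Q * (P u' (g1 \<otimes> v) * P g1 v) * (P v' (g2 \<otimes> w) * P g2 w)
      = (P Pp Q * P v' (g2 \<otimes> w)) * (P u' (g1 \<otimes> v) * P g1 v) * P g2 w" by (simp add: ac_simps)
  also have "\<dots> = (P Pp v' * P (u' \<otimes> g1) (g2 \<otimes> w)) * (P u' g1 * P (u' \<otimes> g1) v) * P g2 w"
    by (simp only: e1 e6)
  also have "\<dots> = (P (u' \<otimes> g1) v * P Pp v') * (P u' g1 * P (u' \<otimes> g1) (g2 \<otimes> w)) * P g2 w"
    by (simp add: ac_simps)
  also have "\<dots> = (P \<one> \<one> * P v v') * (P u' (g1 \<otimes> g2 \<otimes> w) * P g1 (g2 \<otimes> w)) * P g2 w"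
    by (simp only: e2 e4)
  also have "\<dots> = (P \<one> \<one> * P v v') * P u' (g1 \<otimes> g2 \<otimes> w) * (P g1 (g2 \<otimes> w) * P g2 w)"
    by (simp add: ac_simps)
  also have "\<dots> = (P \<one> \<one> * P v v') * P u' (g1 \<otimes> g2 \<otimes> w) * (P g1 g2 * P (g1 \<otimes> g2) w)"
    by (simp only: e3)
  also have "\<dots> = P g1 g2 * (P \<one> \<one> * P v v') * (P u' (g1 \<otimes> g2 \<otimes> w) * P (g1 \<otimes> g2) w)"
    by (simp add: ac_simps)
  finally show ?thesis by (simp add: Pp_def Q_def u'_def v'_def)
qed

locale S8 = group G + transitive_action G X act for G (structure) and X and act +
  fixes x0 :: 'x and k :: "'x \<Rightarrow> 'a" and psi :: "'a \<Rightarrow> 'a \<Rightarrow> complex"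
    and L :: "'x \<Rightarrow> 'a \<Rightarrow> 'a \<Rightarrow> complex"
  assumes x0: "x0 \<in> X"
    and kx: "\<And>x. x \<in> X \<Longrightarrow> k x \<in> carrier G \<and> act (k x) x0 = x"
    and k0: "k x0 = \<one>"
    and coc: "cocycle_on G (stabilizer G act x0) psi"
    and Ldef: "\<And>x g1 g2. L x g1 g2 =
           psi (inv (k (act (g1 \<otimes> g2) x)) \<otimes> g1 \<otimes> k (act g2 x))
               (inv (k (act g2 x)) \<otimes> g2 \<otimes> k x)"
begin

definition hh where "hh g x = inv (k (act g x)) \<otimes> g \<otimes> k x"

lemma act_one: "x \<in> X \<Longrightarrow> act \<one> x = x"
  by (metis id_eq_one restrict_apply')

lemma act_closed: "g \<in> carrier G \<Longrightarrow> x \<in> X \<Longrightarrow> act g x \<in> X"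
  using element_image by blast

lemma act_comp: "g \<in> carrier G \<Longrightarrow> h \<in> carrier G \<Longrightarrow> x \<in> X \<Longrightarrow> act (g \<otimes> h) x = act g (act h x)"
  using composition_rule by blast

lemma act_inv: "g \<in> carrier G \<Longrightarrow> x \<in> X \<Longrightarrow> act (inv g) (act g x) = x"
  by (metis act_comp act_one inv_closed l_inv)

lemma kc: "x \<in> X \<Longrightarrow> k x \<in> carrier G" using kx by blast
lemma ka: "x \<in> X \<Longrightarrow> act (k x) x0 = x" using kx by blast

lemma hh_carrier: "g \<in> carrier G \<Longrightarrow> x \<in> X \<Longrightarrow> hh g x \<in> carrier G"
  unfolding hh_def by (simp add: kc act_closed)

lemma hh_H: assumes "g \<in> carrier G" "x \<in> X" shows "hh g x \<in> stabilizer G act x0"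
proof -
  have "act (hh g x) x0 = act (inv (k (act g x))) (act g (act (k x) x0))"
    unfolding hh_def using assms by (simp add: kc act_closed act_comp x0)
  also have "\<dots> = x0" using assms
    by (metis act_closed act_inv ka kc x0)
  finally show ?thesis using hh_carrier[OF assms] unfolding stabilizer_def by simp
qed

lemma hh_mult: assumes "g1 \<in> carrier G" "g2 \<in> carrier G" "x \<in> X"
  shows "hh (g1 \<otimes> g2) x = hh g1 (act g2 x) \<otimes> hh g2 x"
proof -
  have a: "act (g1 \<otimes> g2) x = act g1 (act g2 x)" using assms act_comp by blast
  have c: "k (act g1 (act g2 x)) \<in> carrier G" "k (act g2 x) \<in> carrier G" "k x \<in> carrier G"
    using assms by (auto simp: kc act_closed)
  have e: "k (act g2 x) \<otimes> (inv k (act g2 x) \<otimes> z) = z" if "z \<in> carrier G" for z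
    using c that by (simp add: m_assoc[symmetric])
  show ?thesis unfolding hh_def a using assms c
    by (simp add: m_assoc e)
qed


lemma H_carrier: "a \<in> stabilizer G act x0 \<Longrightarrow> a \<in> carrier G"
  unfolding stabilizer_def by simp

lemma H_fix: "a \<in> stabilizer G act x0 \<Longrightarrow> act a x0 = x0"
  unfolding stabilizer_def by simp

lemma psi_nz: "a \<in> stabilizer G act x0 \<Longrightarrow> b \<in> stabilizer G act x0 \<Longrightarrow> psi a b \<noteq> 0"
  using coc unfolding cocycle_on_def by blast

lemma psi_coc: "a \<in> stabilizer G act x0 \<Longrightarrow> b \<in> stabilizer G act x0 \<Longrightarrow> c \<in> stabilizer G act x0 \<Longrightarrow>
   psi a (b \<otimes> c) * psi b c = psi a b * psi (a \<otimes> b) c"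
  using coc unfolding cocycle_on_def by blast

lemma L_eq: assumes "x \<in> X" "g1 \<in> carrier G" "g2 \<in> carrier G"
  shows "L x g1 g2 = psi (hh g1 (act g2 x)) (hh g2 x)"
  unfolding Ldef hh_def using assms by (simp add: act_comp)

lemma L_nz: assumes "x \<in> X" "g1 \<in> carrier G" "g2 \<in> carrier G"
  shows "L x g1 g2 \<noteq> 0"
  using assms by (simp add: L_eq psi_nz hh_H act_closed)

lemma L_twist: assumes "x \<in> X" "g1 \<in> carrier G" "g2 \<in> carrier G" "g3 \<in> carrier G"
  shows "L x g1 (g2 \<otimes> g3) * L x g2 g3 = L (act g3 x) g1 g2 * L x (g1 \<otimes> g2) g3"
proof -
  define a where "a = hh g1 (act g2 (act g3 x))"
  define b where "b = hh g2 (act g3 x)"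
  define c where "c = hh g3 x"
  have H: "a \<in> stabilizer G act x0" "b \<in> stabilizer G act x0" "c \<in> stabilizer G act x0"
    unfolding a_def b_def c_def using assms by (auto intro!: hh_H act_closed)
  have 1: "L x g1 (g2 \<otimes> g3) = psi a (b \<otimes> c)"
    using assms by (simp add: L_eq a_def b_def c_def act_comp hh_mult)
  have 2: "L x g2 g3 = psi b c" using assms by (simp add: L_eq b_def c_def)
  have 3: "L (act g3 x) g1 g2 = psi a b" using assms by (simp add: L_eq a_def b_def act_closed)
  have 4: "L x (g1 \<otimes> g2) g3 = psi (a \<otimes> b) c"
    using assms by (simp add: L_eq a_def b_def c_def act_closed hh_mult)
  show ?thesis unfolding 1 2 3 4 using psi_coc[OF H] .
qed


lemma bwd: assumes cP: "cocycle_on G (carrier G) P"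
    and ext: "\<forall>a\<in>stabilizer G act x0. \<forall>b\<in>stabilizer G act x0. P a b = psi a b"
  shows "block_independent G X act L"
proof -
  define gm1 where "gm1 g x = P (inv (k (act g x))) (g \<otimes> k x) * P g (k x)" for g x
  define rho where "rho y = P \<one> \<one> * P (k y) (inv (k y))" for y
  have Pnz: "\<And>a b. a \<in> carrier G \<Longrightarrow> b \<in> carrier G \<Longrightarrow> P a b \<noteq> 0"
    using cP unfolding cocycle_on_def by blast
  have gnz: "\<And>g x. g \<in> carrier G \<Longrightarrow> x \<in> X \<Longrightarrow> gm1 g x \<noteq> 0"
    unfolding gm1_def by (simp add: Pnz kc act_closed)
  have rnz: "\<And>y. y \<in> X \<Longrightarrow> rho y \<noteq> 0"
    unfolding rho_def by (simp add: Pnz kc)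
  have key: "L x g1 g2 * gm1 g1 (act g2 x) * gm1 g2 x = P g1 g2 * rho (act g2 x) * gm1 (g1 \<otimes> g2) x"
    if x: "x \<in> X" and g: "g1 \<in> carrier G" "g2 \<in> carrier G" for x g1 g2
  proof -
    have "L x g1 g2 = P (hh g1 (act g2 x)) (hh g2 x)"
      using ext hh_H x g act_closed by (simp add: L_eq)
    moreover have "act (g1 \<otimes> g2) x = act g1 (act g2 x)" using x g act_comp by blast
    ultimately show ?thesis
      unfolding gm1_def rho_def hh_def
      using coc_conj[OF cP, of "k (act g1 (act g2 x))" "k (act g2 x)" "k x" g1 g2] x g
      by (simp add: kc act_closed)
  qed
  define gam where "gam g x = rho x / gm1 g x" for g x
  have Lp: "gauge_transform G act (\<lambda>_ _. 1) gam L x g h = P g h"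
    if x: "x \<in> X" and g: "g \<in> carrier G" "h \<in> carrier G" for x g h
  proof -
    have nz: "gm1 g (act h x) \<noteq> 0" "gm1 h x \<noteq> 0" "gm1 (g \<otimes> h) x \<noteq> 0" "rho x \<noteq> 0" "rho (act h x) \<noteq> 0"
      using x g by (auto simp: gnz rnz act_closed)
    have "L x g h = P g h * rho (act h x) * gm1 (g \<otimes> h) x / (gm1 g (act h x) * gm1 h x)"
      using key[OF x g] nz by (simp add: field_simps)
    then show ?thesis unfolding gauge_transform_def gam_def using nz by (simp add: field_simps)
  qed
  show ?thesis
    unfolding block_independent_def
  proof (intro exI conjI ballI)
    show "(1::complex) \<noteq> 0" by simp
  next
    fix g x assume "g \<in> carrier G" "x \<in> X"
    then show "gam g x \<noteq> 0" unfolding gam_def by (simp add: gnz rnz)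
  next
    fix a b g x y assume c: "a \<in> carrier G" "b \<in> carrier G" "g \<in> carrier G" "x \<in> X" "y \<in> X"
    then show "ell G (gauge_transform G act (\<lambda>_ _. 1) gam L) x a b g =
               ell G (gauge_transform G act (\<lambda>_ _. 1) gam L) y a b g"
      unfolding ell_def by (simp add: Lp)
  qed
qed


lemma fwd: assumes bi: "block_independent G X act L"
  shows "\<exists>Psi. cocycle_on G (carrier G) Psi \<and>
            (\<forall>a\<in>stabilizer G act x0. \<forall>b\<in>stabilizer G act x0. Psi a b = psi a b)"
proof -
  obtain beta gamma where
    bnz: "\<forall>g\<in>carrier G. \<forall>h\<in>carrier G. beta g h \<noteq> 0" and
    gnz: "\<forall>g\<in>carrier G. \<forall>x\<in>X. gamma g x \<noteq> 0" and
    ind: "\<forall>a\<in>carrier G. \<forall>b\<in>carrier G. \<forall>g\<in>carrier G. \<forall>x\<in>X. \<forall>y\<in>X.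
           ell G (gauge_transform G act beta gamma L) x a b g
             = ell G (gauge_transform G act beta gamma L) y a b g"
    using bi unfolding block_independent_def by blast
  define N where "N x a b = gamma (a \<otimes> b) x / (gamma a (act b x) * gamma b x) * L x a b" for x a b
  have gt: "gauge_transform G act beta gamma L x a b = beta a b * N x a b" for x a b
    unfolding gauge_transform_def N_def by simp
  have Nnz: "N x a b \<noteq> 0" if "x \<in> X" "a \<in> carrier G" "b \<in> carrier G" for x a b
    unfolding N_def using that gnz by (simp add: L_nz act_closed)
  have NT: "N x g1 (g2 \<otimes> g3) * N x g2 g3 = N (act g3 x) g1 g2 * N x (g1 \<otimes> g2) g3"
    if x: "x \<in> X" and g: "g1 \<in> carrier G" "g2 \<in> carrier G" "g3 \<in> carrier G" for x g1 g2 g3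
  proof -
    have a1: "act (g2 \<otimes> g3) x = act g2 (act g3 x)" using x g act_comp by blast
    have a2: "g1 \<otimes> (g2 \<otimes> g3) = g1 \<otimes> g2 \<otimes> g3" using g by (simp add: m_assoc)
    define K where "K = gamma (g1 \<otimes> g2 \<otimes> g3) x /
        (gamma g1 (act g2 (act g3 x)) * gamma g2 (act g3 x) * gamma g3 x)"
    have nz: "gamma g1 (act g2 (act g3 x)) \<noteq> 0" "gamma g2 (act g3 x) \<noteq> 0" "gamma g3 x \<noteq> 0"
       "gamma (g2 \<otimes> g3) x \<noteq> 0" "gamma (g1 \<otimes> g2) (act g3 x) \<noteq> 0"
      using gnz x g by (auto simp: act_closed)
    have "N x g1 (g2 \<otimes> g3) * N x g2 g3 = K * (L x g1 (g2 \<otimes> g3) * L x g2 g3)"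
      unfolding N_def K_def a1 a2 using nz by (simp add: field_simps)
    also have "\<dots> = K * (L (act g3 x) g1 g2 * L x (g1 \<otimes> g2) g3)"
      using L_twist[OF x g] by simp
    also have "\<dots> = N (act g3 x) g1 g2 * N x (g1 \<otimes> g2) g3"
      unfolding N_def K_def a1 a2 using nz by (simp add: field_simps)
    finally show ?thesis .
  qed
  have NI: "N x (a \<otimes> g) (inv g \<otimes> b) / N x a b = N y (a \<otimes> g) (inv g \<otimes> b) / N y a b"
    if "x \<in> X" "y \<in> X" "a \<in> carrier G" "b \<in> carrier G" "g \<in> carrier G" for x y a b g
  proof -
    have "ell G (gauge_transform G act beta gamma L) x a b g
             = ell G (gauge_transform G act beta gamma L) y a b g" using ind that by blast
    hence "beta (a \<otimes> g) (inv g \<otimes> b) * N x (a \<otimes> g) (inv g \<otimes> b) / (beta a b * N x a b) =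
           beta (a \<otimes> g) (inv g \<otimes> b) * N y (a \<otimes> g) (inv g \<otimes> b) / (beta a b * N y a b)"
      unfolding ell_def gt by simp
    moreover have "beta (a \<otimes> g) (inv g \<otimes> b) \<noteq> 0" "beta a b \<noteq> 0" using bnz that by auto
    moreover have "N x (a \<otimes> g) (inv g \<otimes> b) \<noteq> 0" "N x a b \<noteq> 0"
       "N y (a \<otimes> g) (inv g \<otimes> b) \<noteq> 0" "N y a b \<noteq> 0" using that by (simp_all add: Nnz)
    ultimately show ?thesis by (simp add: field_simps)
  qed
  define c where "c x = N x \<one> \<one>" for x
  have cnz: "x \<in> X \<Longrightarrow> c x \<noteq> 0" for x unfolding c_def by (simp add: Nnz)
  have N1: "N x a \<one> = c x" if "x \<in> X" "a \<in> carrier G" for x a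
  proof -
    have "N x a (\<one> \<otimes> \<one>) * N x \<one> \<one> = N (act \<one> x) a \<one> * N x (a \<otimes> \<one>) \<one>"
      using NT[of x a \<one> \<one>] that by simp
    hence "N x a \<one> * N x \<one> \<one> = N x a \<one> * N x a \<one>" using that by (simp add: act_one)
    thus ?thesis using Nnz[of x a \<one>] that unfolding c_def by simp
  qed
  have P: "N x a g / c x = N y a g / c y"
    if "x \<in> X" "y \<in> X" "a \<in> carrier G" "g \<in> carrier G" for x y a g
  proof -
    have "N x (a \<otimes> g) (inv g \<otimes> g) / N x a g = N y (a \<otimes> g) (inv g \<otimes> g) / N y a g"
      using NI that by blast
    hence "c x / N x a g = c y / N y a g" using that by (simp add: N1)
    thus ?thesis using that Nnz cnz by (simp add: field_simps)
  qed
  define F where "F a b = N x0 a b / c x0" for a b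
  have NF: "N x a b = c x * F a b" if "x \<in> X" "a \<in> carrier G" "b \<in> carrier G" for x a b
    using P[of x x0 a b] that x0 cnz[of x] unfolding F_def by (simp add: field_simps)
  have Fnz: "F a b \<noteq> 0" if "a \<in> carrier G" "b \<in> carrier G" for a b
    unfolding F_def using that x0 by (simp add: Nnz cnz)
  have c_act: "c (act g x0) = c x0 * F \<one> g" if "g \<in> carrier G" for g
  proof -
    have "N x0 \<one> (\<one> \<otimes> g) * N x0 \<one> g = N (act g x0) \<one> \<one> * N x0 (\<one> \<otimes> \<one>) g"
      using NT[of x0 \<one> \<one> g] that x0 by simp
    hence "N x0 \<one> g * N x0 \<one> g = c (act g x0) * N x0 \<one> g" using that by (simp add: c_def)
    hence "c (act g x0) = N x0 \<one> g" using Nnz[of x0 \<one> g] that x0 by simp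
    thus ?thesis using NF[of x0 \<one> g] that x0 by simp
  qed
  have E: "F a (b \<otimes> d) * F b d = F \<one> d * F a b * F (a \<otimes> b) d"
    if "a \<in> carrier G" "b \<in> carrier G" "d \<in> carrier G" for a b d
  proof -
    have "N x0 a (b \<otimes> d) * N x0 b d = N (act d x0) a b * N x0 (a \<otimes> b) d"
      using NT[of x0 a b d] that x0 by simp
    hence "c x0 * F a (b \<otimes> d) * (c x0 * F b d) = (c x0 * F \<one> d) * F a b * (c x0 * F (a \<otimes> b) d)"
      using that x0 by (simp add: NF act_closed c_act)
    thus ?thesis using cnz[OF x0] by (simp add: field_simps)
  qed
  have E1: "F \<one> (b \<otimes> d) = F \<one> b * F \<one> d" if "b \<in> carrier G" "d \<in> carrier G" for b d
  proof -
    have "F \<one> (b \<otimes> d) * F b d = F \<one> d * F \<one> b * F b d" using E[of \<one> b d] that by simp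
    thus ?thesis using Fnz[of b d] that by (simp add: field_simps)
  qed
  define Gm where "Gm g = gamma g x0" for g
  have Gnz: "g \<in> carrier G \<Longrightarrow> Gm g \<noteq> 0" for g unfolding Gm_def using gnz x0 by blast
  define Psi where "Psi a b = c x0 * F a b / F \<one> b * (Gm a * Gm b / Gm (a \<otimes> b))" for a b
  have coc2: "cocycle_on G (carrier G) Psi"
    unfolding cocycle_on_def
  proof (intro conjI ballI)
    fix a b assume "a \<in> carrier G" "b \<in> carrier G"
    then show "Psi a b \<noteq> 0" unfolding Psi_def by (simp add: Fnz Gnz cnz x0)
  next
    fix a b d assume abd: "a \<in> carrier G" "b \<in> carrier G" "d \<in> carrier G"
    have as: "a \<otimes> (b \<otimes> d) = a \<otimes> b \<otimes> d" using abd by (simp add: m_assoc)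
    have nz: "F \<one> b \<noteq> 0" "F \<one> d \<noteq> 0" "F \<one> (b \<otimes> d) \<noteq> 0" "Gm (a \<otimes> b \<otimes> d) \<noteq> 0"
      "Gm (b \<otimes> d) \<noteq> 0" "Gm (a \<otimes> b) \<noteq> 0" "Gm a \<noteq> 0" "Gm b \<noteq> 0" "Gm d \<noteq> 0"
      using abd by (auto simp: Fnz Gnz)
    have F: "F a (b \<otimes> d) * F b d / (F \<one> (b \<otimes> d) * F \<one> d) = F a b * F (a \<otimes> b) d / (F \<one> b * F \<one> d)"
      using E[OF abd] E1[of b d] abd nz by (simp add: field_simps)
    have "Psi a (b \<otimes> d) * Psi b d = c x0 * c x0 * (F a (b \<otimes> d) * F b d / (F \<one> (b \<otimes> d) * F \<one> d))
         * (Gm a * Gm b * Gm d / Gm (a \<otimes> b \<otimes> d))"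
      unfolding Psi_def as using nz by (simp add: field_simps)
    also have "\<dots> = c x0 * c x0 * (F a b * F (a \<otimes> b) d / (F \<one> b * F \<one> d))
         * (Gm a * Gm b * Gm d / Gm (a \<otimes> b \<otimes> d))" by (simp only: F)
    also have "\<dots> = Psi a b * Psi (a \<otimes> b) d"
      unfolding Psi_def using nz by (simp add: field_simps)
    finally show "Psi a (b \<otimes> d) * Psi b d = Psi a b * Psi (a \<otimes> b) d" .
  qed
  have ext: "Psi a b = psi a b" if ab: "a \<in> stabilizer G act x0" "b \<in> stabilizer G act x0" for a b
  proof -
    have c: "a \<in> carrier G" "b \<in> carrier G" using ab H_carrier by auto
    have f: "act a x0 = x0" "act b x0 = x0" using ab H_fix by auto
    have fab: "act (a \<otimes> b) x0 = x0" using f c act_comp x0 by simp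
    have F1: "F \<one> b = 1" using c_act[OF c(2)] f cnz[OF x0] by simp
    have L0: "L x0 a b = psi a b"
      using c x0 f fab by (simp add: L_eq hh_def k0)
    have "F a b = Gm (a \<otimes> b) / (Gm a * Gm b) * psi a b / c x0"
      unfolding F_def N_def Gm_def using f L0 by simp
    thus ?thesis unfolding Psi_def using F1 c cnz[OF x0] Gnz by (simp add: field_simps)
  qed
  show ?thesis using coc2 ext by blast
qed

end

theorem mainTheorem8:
  fixes G :: "('g, 'm) monoid_scheme" (structure)
    and X :: "'x set" and act :: "'g \<Rightarrow> 'x \<Rightarrow> 'x"
    and x0 :: 'x and k :: "'x \<Rightarrow> 'g" and psi :: "'g \<Rightarrow> 'g \<Rightarrow> complex"
    and L :: "'x \<Rightarrow> 'g \<Rightarrow> 'g \<Rightarrow> complex"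
  assumes "group G" and "finite (carrier G)" and "finite X"
    and "transitive_action G X act"
    and "x0 \<in> X"
    and "\<And>x. x \<in> X \<Longrightarrow> k x \<in> carrier G \<and> act (k x) x0 = x"
    and "k x0 = \<one>"
    and "\<And>a b. a \<in> stabilizer G act x0 \<Longrightarrow> b \<in> stabilizer G act x0 \<Longrightarrow> cmod (psi a b) = 1"
    and "cocycle_on G (stabilizer G act x0) psi"
    and "\<And>x g1 g2. L x g1 g2 =
           psi (inv (k (act (g1 \<otimes> g2) x)) \<otimes> g1 \<otimes> k (act g2 x))
               (inv (k (act g2 x)) \<otimes> g2 \<otimes> k x)"
  shows "block_independent G X act L \<longleftrightarrow>
         (\<exists>Psi. cocycle_on G (carrier G) Psi \<and>
            (\<forall>a\<in>stabilizer G act x0. \<forall>b\<in>stabilizer G act x0. Psi a b = psi a b))"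
proof -
  have "S8 G X act x0 k psi L"
    by (intro S8.intro S8_axioms.intro) (use assms in auto)
  then interpret S8 G X act x0 k psi L .
  show ?thesis using fwd bwd by blast
qed

end
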